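(* Let $p\in[1,\infty]$, $d\in\mathbb N$, $m_0:=d$, $m_1\le m_2\le\cdots$ positive integers, and $\mathbf W_n\in\mathbb R^{m_n\times m_{n-1}}$ for $n\in\mathbb N$. If $\mathbf W_n=\mathbf I_{m_n,m_{n-1}}+\mathbf P_n$ with $\sum_{n=1}^\infty\|\mathbf P_n\|_p<\infty$, then $\lim_{n\to\infty}\mathbf I_{\infty,m_n}\mathbf W_n\mathbf W_{n-1}\cdots\mathbf W_1$ exists in $\mathcal B(\mathbb R^d,\ell^p)$.
   Context: $\|\cdot\|_p$ on matrices denotes the operator norm induced by the $\ell^p$ vector norms. For $m'\ge m$, $\mathbf I_{m',m}$ is the $m'\times m$ matrix with top $m\times m$ block the identity and the remaining entries zero; $\mathbf I_{\infty,m}$ is the analogous matrix with infinitely many rows (the embedding $\mathbb R^m\to\ell^p$). $\mathcal B(\mathbb R^d,\ell^p)$ is the Banach space of bounded linear operators $\mathbb R^d\to\ell^p$ with the induced operator norm. *)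

theory Defs
  imports "HOL-Analysis.Analysis"
begin

text \<open>Real sequences x :: nat => real model both l^p and R^k (the latter as
sequences vanishing from index k on). The exponent p ranges over [1, infinity] as an ereal.\<close>

definition lp_norm :: "ereal \<Rightarrow> (nat \<Rightarrow> real) \<Rightarrow> real" where
  "lp_norm p x =
     (if p = \<infinity> then (SUP i. \<bar>x i\<bar>)
      else (\<Sum>i. \<bar>x i\<bar> powr real_of_ereal p) powr (1 / real_of_ereal p))"

definition in_lp :: "ereal \<Rightarrow> (nat \<Rightarrow> real) \<Rightarrow> bool" where
  "in_lp p x =
     (if p = \<infinity> then bdd_above (range (\<lambda>i. \<bar>x i\<bar>))
      else summable (\<lambda>i. \<bar>x i\<bar> powr real_of_ereal p))"

definition mat_opnorm_inf :: "ereal \<Rightarrow> nat \<Rightarrow> (nat \<Rightarrow> nat \<Rightarrow> real) \<Rightarrow> real" where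
  "mat_opnorm_inf p k M =
     (SUP x \<in> {x. (\<forall>j\<ge>k. x j = 0) \<and> lp_norm p x \<le> 1}.
        lp_norm p (\<lambda>i. \<Sum>j<k. M i j * x j))"

definition mat_opnorm :: "ereal \<Rightarrow> nat \<Rightarrow> nat \<Rightarrow> (nat \<Rightarrow> nat \<Rightarrow> real) \<Rightarrow> real" where
  "mat_opnorm p r k M = mat_opnorm_inf p k (\<lambda>i j. if i < r then M i j else 0)"

text \<open>The matrix I_{a,b} (entries for i<a, j<b).\<close>
definition Imat :: "nat \<Rightarrow> nat \<Rightarrow> real" where
  "Imat i j = (if i = j then 1 else 0)"

text \<open>The product W_n W_{n-1} ... W_1 (an m_n x d matrix); W_0 is unused,
the empty product is the d x d identity.\<close>
fun mat_prod :: "(nat \<Rightarrow> nat) \<Rightarrow> (nat \<Rightarrow> nat \<Rightarrow> nat \<Rightarrow> real) \<Rightarrow> nat \<Rightarrow> nat \<Rightarrow> nat \<Rightarrow> real" where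
  "mat_prod m W 0 i j = Imat i j"
| "mat_prod m W (Suc n) i j = (\<Sum>k<m n. W (Suc n) i k * mat_prod m W n k j)"

definition embedded_prod :: "(nat \<Rightarrow> nat) \<Rightarrow> (nat \<Rightarrow> nat \<Rightarrow> nat \<Rightarrow> real) \<Rightarrow> nat \<Rightarrow> nat \<Rightarrow> nat \<Rightarrow> real" where
  "embedded_prod m W n i j = (if i < m n then mat_prod m W n i j else 0)"

end

theory Submission
  imports Defs
begin

lemma powr_convex0:
  fixes q u v t :: real
  assumes q: "q \<ge> 1" and u: "u \<ge> 0" and v: "v \<ge> 0" and t: "0 \<le> t" "t \<le> 1"
  shows "(t * u + (1 - t) * v) powr q \<le> t * u powr q + (1 - t) * v powr q"
proof -
  have pw: "s powr q \<le> s" if "0 \<le> s" "s \<le> 1" for s :: real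
  proof (cases "s = 0")
    case False
    then have "s powr q \<le> s powr 1" using that q by (intro powr_mono') auto
    then show ?thesis using False that by simp
  qed simp
  show ?thesis
  proof (cases "u = 0")
    case True
    have "((1 - t) * v) powr q = (1 - t) powr q * v powr q" using t v by (simp add: powr_mult)
    also have "\<dots> \<le> (1 - t) * v powr q" using pw[of "1-t"] t by (intro mult_right_mono) auto
    finally show ?thesis using True by simp
  next
    case u0: False
    show ?thesis
    proof (cases "v = 0")
      case True
      have "(t * u) powr q = t powr q * u powr q" using t u by (simp add: powr_mult)
      also have "\<dots> \<le> t * u powr q" using pw[of t] t by (intro mult_right_mono) auto
      finally show ?thesis using True u0 by simp
    next
      case False
      have "(\<lambda>x. x powr q) ((1 - (1-t)) *\<^sub>R u + (1-t) *\<^sub>R v) \<le> (1 - (1-t)) * (\<lambda>x. x powr q) u + (1-t) * (\<lambda>x. x powr q) v"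
        by (rule convex_onD[OF powr_convex[OF q]]) (use t u v u0 False in auto)
      then show ?thesis by simp
    qed
  qed
qed

lemma fin_q: "1 \<le> p \<Longrightarrow> p \<noteq> \<infinity> \<Longrightarrow> 1 \<le> real_of_ereal p \<and> p = ereal (real_of_ereal p)"
  by (cases p) auto

lemma lp_fin: "(\<forall>i\<ge>K. x i = 0) \<Longrightarrow> in_lp p x"
proof -
  assume K: "\<forall>i\<ge>K. x i = 0"
  show ?thesis
  proof (cases "p = \<infinity>")
    case True
    have "range (\<lambda>i. \<bar>x i\<bar>) \<subseteq> insert 0 ((\<lambda>i. \<bar>x i\<bar>) ` {..<K})"
    proof
      fix y assume "y \<in> range (\<lambda>i. \<bar>x i\<bar>)"
      then obtain i where y: "y = \<bar>x i\<bar>" by auto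
      show "y \<in> insert 0 ((\<lambda>i. \<bar>x i\<bar>) ` {..<K})"
      proof (cases "i < K")
        case True then show ?thesis using y by auto
      next
        case False then show ?thesis using y K by auto
      qed
    qed
    then have "bdd_above (range (\<lambda>i. \<bar>x i\<bar>))"
      by (meson bdd_above_finite bdd_above_mono finite_imageI finite_insert finite_lessThan)
    then show ?thesis using True by (simp add: in_lp_def)
  next
    case False
    have "summable (\<lambda>i. \<bar>x i\<bar> powr real_of_ereal p)"
      by (rule summable_finite[of "{..<K}"]) (use K in auto)
    then show ?thesis using False by (simp add: in_lp_def)
  qed
qed

lemma lp_zero: "lp_norm p (\<lambda>i. 0) = 0"
  by (simp add: lp_norm_def)

lemma lp_nonneg: "in_lp p x \<Longrightarrow> 0 \<le> lp_norm p x"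
proof (cases "p = \<infinity>")
  case True
  assume "in_lp p x"
  then have "bdd_above (range (\<lambda>i. \<bar>x i\<bar>))" using True by (simp add: in_lp_def)
  then have "\<bar>x 0\<bar> \<le> (SUP i. \<bar>x i\<bar>)" by (rule cSUP_upper[rotated]) auto
  then show ?thesis using True unfolding lp_norm_def by (smt (verit))
qed (simp add: lp_norm_def)

lemma lp_coord: "1 \<le> p \<Longrightarrow> in_lp p x \<Longrightarrow> \<bar>x i\<bar> \<le> lp_norm p x"
proof (cases "p = \<infinity>")
  case True
  assume "in_lp p x"
  then have "bdd_above (range (\<lambda>i. \<bar>x i\<bar>))" using True by (simp add: in_lp_def)
  then have "\<bar>x i\<bar> \<le> (SUP i. \<bar>x i\<bar>)" by (rule cSUP_upper[rotated]) auto
  then show ?thesis using True by (simp add: lp_norm_def)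
next
  case False
  assume p: "1 \<le> p" and x: "in_lp p x"
  define q where "q = real_of_ereal p"
  have q: "1 \<le> q" using fin_q[OF p False] q_def by auto
  have sx: "summable (\<lambda>i. \<bar>x i\<bar> powr q)" using x False by (simp add: in_lp_def q_def)
  have "(\<Sum>i\<in>{i}. \<bar>x i\<bar> powr q) \<le> (\<Sum>i. \<bar>x i\<bar> powr q)"
    by (rule sum_le_suminf[OF sx]) auto
  then have "\<bar>x i\<bar> powr q \<le> (\<Sum>i. \<bar>x i\<bar> powr q)" by simp
  then have "(\<bar>x i\<bar> powr q) powr (1/q) \<le> (\<Sum>i. \<bar>x i\<bar> powr q) powr (1/q)"
    using q by (intro powr_mono2) auto
  then show ?thesis using q False by (simp add: lp_norm_def q_def powr_powr)
qed

lemma lp_unit: "1 \<le> p \<Longrightarrow> lp_norm p (\<lambda>i. if i = j then 1 else 0) \<le> 1"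
proof (cases "p = \<infinity>")
  case True
  have "(SUP i. \<bar>if i = j then 1 else 0::real\<bar>) \<le> 1" by (rule cSUP_least) auto
  then show ?thesis using True by (simp add: lp_norm_def)
next
  case False
  assume p: "1 \<le> p"
  define q where "q = real_of_ereal p"
  have q: "1 \<le> q" using fin_q[OF p False] q_def by auto
  have "(\<lambda>i. \<bar>if i = j then 1 else 0::real\<bar> powr q) = (\<lambda>i. if i = j then (\<lambda>_. 1::real) i else 0)"
    by auto
  moreover have "(\<lambda>i. if i = j then (\<lambda>_. 1::real) i else 0) sums 1" using sums_single[of j "\<lambda>_. 1::real"] by simp
  ultimately have "(\<Sum>i. \<bar>if i = j then 1 else 0::real\<bar> powr q) = 1" by (simp add: sums_iff)
  then show ?thesis using False by (simp add: lp_norm_def q_def)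
qed

lemma lp_scale: "1 \<le> p \<Longrightarrow> in_lp p x \<Longrightarrow>
   in_lp p (\<lambda>i. c * x i) \<and> lp_norm p (\<lambda>i. c * x i) \<le> \<bar>c\<bar> * lp_norm p x"
proof (cases "p = \<infinity>")
  case True
  assume "in_lp p x"
  then have bd: "bdd_above (range (\<lambda>i. \<bar>x i\<bar>))" using True by (simp add: in_lp_def)
  have le: "\<bar>c * x i\<bar> \<le> \<bar>c\<bar> * (SUP i. \<bar>x i\<bar>)" for i
  proof -
    have "\<bar>x i\<bar> \<le> (SUP i. \<bar>x i\<bar>)" using bd by (rule cSUP_upper[rotated]) auto
    then show ?thesis by (simp add: abs_mult mult_left_mono)
  qed
  then have "bdd_above (range (\<lambda>i. \<bar>c * x i\<bar>))" by (intro bdd_aboveI2) 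
  moreover have "(SUP i. \<bar>c * x i\<bar>) \<le> \<bar>c\<bar> * (SUP i. \<bar>x i\<bar>)" using le by (intro cSUP_least) auto
  ultimately show ?thesis using True by (simp add: in_lp_def lp_norm_def)
next
  case False
  assume p: "1 \<le> p" and x: "in_lp p x"
  define q where "q = real_of_ereal p"
  have q: "1 \<le> q" using fin_q[OF p False] q_def by auto
  have sx: "summable (\<lambda>i. \<bar>x i\<bar> powr q)" using x False by (simp add: in_lp_def q_def)
  have eq: "(\<lambda>i. \<bar>c * x i\<bar> powr q) = (\<lambda>i. \<bar>c\<bar> powr q * \<bar>x i\<bar> powr q)"
    by (simp add: abs_mult powr_mult)
  have s2: "summable (\<lambda>i. \<bar>c * x i\<bar> powr q)" unfolding eq by (intro summable_mult sx)
  have "(\<Sum>i. \<bar>c * x i\<bar> powr q) powr (1/q) = (\<bar>c\<bar> powr q * (\<Sum>i. \<bar>x i\<bar> powr q)) powr (1/q)"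
    unfolding eq by (simp add: suminf_mult[OF sx])
  also have "\<dots> = \<bar>c\<bar> * (\<Sum>i. \<bar>x i\<bar> powr q) powr (1/q)"
    using q by (simp add: powr_mult powr_powr suminf_nonneg[OF sx])
  finally show ?thesis using s2 False by (simp add: in_lp_def lp_norm_def q_def)
qed

lemma lp_add: assumes p: "1 \<le> p" and x: "in_lp p x" and y: "in_lp p y"
  shows "in_lp p (\<lambda>i. x i + y i) \<and> lp_norm p (\<lambda>i. x i + y i) \<le> lp_norm p x + lp_norm p y"
proof (cases "p = \<infinity>")
  case True
  have bx: "bdd_above (range (\<lambda>i. \<bar>x i\<bar>))" using x True by (simp add: in_lp_def)
  have by': "bdd_above (range (\<lambda>i. \<bar>y i\<bar>))" using y True by (simp add: in_lp_def)
  have le: "\<bar>x i + y i\<bar> \<le> (SUP i. \<bar>x i\<bar>) + (SUP i. \<bar>y i\<bar>)" for i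
  proof -
    have "\<bar>x i\<bar> \<le> (SUP i. \<bar>x i\<bar>)" using bx by (rule cSUP_upper[rotated]) auto
    moreover have "\<bar>y i\<bar> \<le> (SUP i. \<bar>y i\<bar>)" using by' by (rule cSUP_upper[rotated]) auto
    ultimately show ?thesis by linarith
  qed
  then have "bdd_above (range (\<lambda>i. \<bar>x i + y i\<bar>))" by (intro bdd_aboveI2) 
  moreover have "(SUP i. \<bar>x i + y i\<bar>) \<le> (SUP i. \<bar>x i\<bar>) + (SUP i. \<bar>y i\<bar>)" using le by (intro cSUP_least) auto
  ultimately show ?thesis using True by (simp add: in_lp_def lp_norm_def)
next
  case False
  define q where "q = real_of_ereal p"
  have q: "1 \<le> q" using fin_q[OF p False] q_def by auto
  have sx: "summable (\<lambda>i. \<bar>x i\<bar> powr q)" using x False by (simp add: in_lp_def q_def)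
  have sy: "summable (\<lambda>i. \<bar>y i\<bar> powr q)" using y False by (simp add: in_lp_def q_def)
  define a where "a = lp_norm p x"
  define b where "b = lp_norm p y"
  define Sx where "Sx = (\<Sum>i. \<bar>x i\<bar> powr q)"
  define Sy where "Sy = (\<Sum>i. \<bar>y i\<bar> powr q)"
  have a: "a = Sx powr (1/q)" using False by (simp add: a_def Sx_def lp_norm_def q_def)
  have b: "b = Sy powr (1/q)" using False by (simp add: b_def Sy_def lp_norm_def q_def)
  have Sx0: "Sx \<ge> 0" unfolding Sx_def by (intro suminf_nonneg[OF sx]) auto
  have Sy0: "Sy \<ge> 0" unfolding Sy_def by (intro suminf_nonneg[OF sy]) auto
  have aSx: "a powr q = Sx" using a q Sx0 by (simp add: powr_powr)
  have bSy: "b powr q = Sy" using b q Sy0 by (simp add: powr_powr)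
  show ?thesis
  proof (cases "a = 0")
    case True
    have "x i = 0" for i using lp_coord[OF p x, of i] True a_def by simp
    then have "(\<lambda>i. x i + y i) = y" by auto
    then show ?thesis using y True a_def b_def by simp
  next
    case a0: False
    show ?thesis
    proof (cases "b = 0")
      case True
      have "y i = 0" for i using lp_coord[OF p y, of i] True b_def by simp
      then have "(\<lambda>i. x i + y i) = x" by auto
      then show ?thesis using x True a_def b_def by simp
    next
      case b0: False
      have apos: "a > 0" using a0 lp_nonneg[OF x] a_def by simp
      have bpos: "b > 0" using b0 lp_nonneg[OF y] b_def by simp
      have Sxp: "Sx > 0" using aSx apos by (metis powr_gt_zero less_le) 
      have Syp: "Sy > 0" using bSy bpos by (metis powr_gt_zero less_le)
      define t where "t = a / (a + b)"
      have t: "0 \<le> t" "t \<le> 1" using apos bpos by (auto simp: t_def)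
      have t1: "1 - t = b / (a + b)" using apos bpos by (simp add: t_def field_simps)
      define g where "g i = (a+b) powr q * (t / Sx * \<bar>x i\<bar> powr q + (1-t) / Sy * \<bar>y i\<bar> powr q)" for i
      have gs: "g sums ((a+b) powr q * (t / Sx * Sx + (1-t) / Sy * Sy))"
        unfolding g_def Sx_def Sy_def
        by (intro sums_mult sums_add summable_sums sx sy)
      then have gs': "g sums ((a+b) powr q)" using Sxp Syp by simp
      have fle: "\<bar>x i + y i\<bar> powr q \<le> g i" for i
      proof -
        have "\<bar>x i + y i\<bar> powr q \<le> (\<bar>x i\<bar> + \<bar>y i\<bar>) powr q"
          using q by (intro powr_mono2) (auto simp: abs_triangle_ineq)
        also have "\<bar>x i\<bar> + \<bar>y i\<bar> = (a+b) * (t * (\<bar>x i\<bar> / a) + (1-t) * (\<bar>y i\<bar> / b))"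
        proof -
          have e1: "(a+b) * (t * (\<bar>x i\<bar> / a)) = \<bar>x i\<bar>" using apos bpos by (simp add: t_def)
          have e2: "(a+b) * ((1-t) * (\<bar>y i\<bar> / b)) = \<bar>y i\<bar>" unfolding t1 using apos bpos by simp
          show ?thesis unfolding distrib_left e1 e2 ..
        qed
        also have "((a+b) * (t * (\<bar>x i\<bar> / a) + (1-t) * (\<bar>y i\<bar> / b))) powr q
           = (a+b) powr q * (t * (\<bar>x i\<bar> / a) + (1-t) * (\<bar>y i\<bar> / b)) powr q"
          using apos bpos t by (intro powr_mult; auto)
        also have "\<dots> \<le> (a+b) powr q * (t * (\<bar>x i\<bar> / a) powr q + (1-t) * (\<bar>y i\<bar> / b) powr q)"
          using apos bpos t q by (intro mult_left_mono powr_convex0) auto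
        also have "(\<bar>x i\<bar> / a) powr q = \<bar>x i\<bar> powr q / Sx" using apos aSx by (simp add: powr_divide)
        also have "(\<bar>y i\<bar> / b) powr q = \<bar>y i\<bar> powr q / Sy" using bpos bSy by (simp add: powr_divide)
        finally show ?thesis by (simp add: g_def)
      qed
      have sf: "summable (\<lambda>i. \<bar>x i + y i\<bar> powr q)"
        by (rule summable_comparison_test[of "\<lambda>i. \<bar>x i + y i\<bar> powr q" g])
           (use fle gs' in \<open>auto simp: sums_iff\<close>)
      have "(\<Sum>i. \<bar>x i + y i\<bar> powr q) \<le> (a+b) powr q"
        using suminf_le[OF fle sf] gs' by (simp add: sums_iff)
      then have "(\<Sum>i. \<bar>x i + y i\<bar> powr q) powr (1/q) \<le> ((a+b) powr q) powr (1/q)"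
        using q by (intro powr_mono2) (auto intro: suminf_nonneg[OF sf])
      also have "\<dots> = a + b" using apos bpos q by (simp add: powr_powr)
      finally show ?thesis using sf False by (simp add: in_lp_def lp_norm_def q_def a_def b_def)
    qed
  qed
qed

lemma lp_fatou:
  assumes p: "1 \<le> p" and lim: "\<And>i. (\<lambda>n. x n i) \<longlonglongrightarrow> y i"
    and xn: "\<And>n. in_lp p (x n)" and bd: "\<And>n. lp_norm p (x n) \<le> B"
  shows "in_lp p y \<and> lp_norm p y \<le> B"
proof -
  have B0: "0 \<le> B" using lp_nonneg[OF xn[of 0]] bd[of 0] by simp
  have ci: "\<bar>y i\<bar> \<le> B" for i
  proof (rule LIMSEQ_le_const2)
    show "(\<lambda>n. \<bar>x n i\<bar>) \<longlonglongrightarrow> \<bar>y i\<bar>" by (intro tendsto_rabs lim)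
    show "\<exists>N. \<forall>n\<ge>N. \<bar>x n i\<bar> \<le> B" using lp_coord[OF p xn] bd by (meson order.trans)
  qed
  show ?thesis
  proof (cases "p = \<infinity>")
    case True
    have "bdd_above (range (\<lambda>i. \<bar>y i\<bar>))" using ci by (intro bdd_aboveI2)
    moreover have "(SUP i. \<bar>y i\<bar>) \<le> B" using ci by (intro cSUP_least) auto
    ultimately show ?thesis using True by (simp add: in_lp_def lp_norm_def)
  next
    case False
    define q where "q = real_of_ereal p"
    have q: "1 \<le> q" using fin_q[OF p False] q_def by auto
    have sx: "summable (\<lambda>i. \<bar>x n i\<bar> powr q)" for n using xn[of n] False by (simp add: in_lp_def q_def)
    have Sle: "(\<Sum>i. \<bar>x n i\<bar> powr q) \<le> B powr q" for n
    proof -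
      have S0: "0 \<le> (\<Sum>i. \<bar>x n i\<bar> powr q)" by (intro suminf_nonneg[OF sx]) auto
      have "lp_norm p (x n) = (\<Sum>i. \<bar>x n i\<bar> powr q) powr (1/q)"
        using False by (simp add: lp_norm_def q_def)
      then have "((\<Sum>i. \<bar>x n i\<bar> powr q) powr (1/q)) powr q \<le> B powr q"
        using bd[of n] q S0 by (intro powr_mono2) auto
      then show ?thesis using q S0 by (simp add: powr_powr)
    qed
    have part: "(\<Sum>i<K. \<bar>y i\<bar> powr q) \<le> B powr q" for K
    proof (rule LIMSEQ_le_const2)
      show "(\<lambda>n. \<Sum>i<K. \<bar>x n i\<bar> powr q) \<longlonglongrightarrow> (\<Sum>i<K. \<bar>y i\<bar> powr q)"
        using q by (intro tendsto_sum tendsto_powr' tendsto_rabs lim tendsto_const) auto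
      show "\<exists>N. \<forall>n\<ge>N. (\<Sum>i<K. \<bar>x n i\<bar> powr q) \<le> B powr q"
        using sum_le_suminf[OF sx] Sle by (meson finite_lessThan order.trans powr_ge_zero)
    qed
    have sy: "summable (\<lambda>i. \<bar>y i\<bar> powr q)" by (rule summableI_nonneg_bounded[OF _ part]) auto
    have "(\<Sum>i. \<bar>y i\<bar> powr q) \<le> B powr q" by (rule suminf_le_const[OF sy part])
    then have "(\<Sum>i. \<bar>y i\<bar> powr q) powr (1/q) \<le> (B powr q) powr (1/q)"
      using q by (intro powr_mono2) (auto intro: suminf_nonneg[OF sy])
    also have "\<dots> = B" using B0 q by (simp add: powr_powr)
    finally show ?thesis using sy False by (simp add: in_lp_def lp_norm_def q_def)
  qed
qed

lemma lp_sum: assumes p: "1 \<le> p" and A: "finite A" and f: "\<forall>j\<in>A. in_lp p (f j)"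
  shows "in_lp p (\<lambda>i. \<Sum>j\<in>A. f j i) \<and> lp_norm p (\<lambda>i. \<Sum>j\<in>A. f j i) \<le> (\<Sum>j\<in>A. lp_norm p (f j))"
  using A f
proof (induction A rule: finite_induct)
  case empty
  then show ?case by (simp add: lp_zero lp_fin)
next
  case (insert a A)
  have "in_lp p (\<lambda>i. f a i + (\<Sum>j\<in>A. f j i)) \<and>
        lp_norm p (\<lambda>i. f a i + (\<Sum>j\<in>A. f j i)) \<le> lp_norm p (f a) + lp_norm p (\<lambda>i. \<Sum>j\<in>A. f j i)"
    using insert by (intro lp_add[OF p]) auto
  then show ?case using insert by auto
qed

lemma opnorm_apply:
  assumes p: "1 \<le> p" and rows: "\<forall>i j. i \<ge> r \<longrightarrow> M i j = 0" and y: "\<forall>j\<ge>k. y j = 0"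
  shows "lp_norm p (\<lambda>i. \<Sum>j<k. M i j * y j) \<le> mat_opnorm_inf p k M * lp_norm p y"
    and "0 \<le> mat_opnorm_inf p k M"
proof -
  define S where "S = {x. (\<forall>j\<ge>k. x j = 0) \<and> lp_norm p x \<le> 1}"
  have outlp: "in_lp p (\<lambda>i. \<Sum>j<k. M i j * x j)" for x
    by (rule lp_fin[of r]) (use rows in auto)
  have col: "in_lp p (\<lambda>i. M i j)" for j by (rule lp_fin[of r]) (use rows in auto)
  have bd: "lp_norm p (\<lambda>i. \<Sum>j<k. M i j * x j) \<le> (\<Sum>j<k. lp_norm p (\<lambda>i. M i j))" if "x \<in> S" for x
  proof -
    have xl: "in_lp p x" using that lp_fin unfolding S_def by blast
    have "lp_norm p (\<lambda>i. \<Sum>j<k. x j * M i j) \<le> (\<Sum>j<k. lp_norm p (\<lambda>i. x j * M i j))"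
      using lp_sum[OF p, of "{..<k}" "\<lambda>j i. x j * M i j"] lp_scale[OF p col] by auto
    also have "\<dots> \<le> (\<Sum>j<k. lp_norm p (\<lambda>i. M i j))"
    proof (rule sum_mono)
      fix j
      have "lp_norm p (\<lambda>i. x j * M i j) \<le> \<bar>x j\<bar> * lp_norm p (\<lambda>i. M i j)" using lp_scale[OF p col] by blast
      also have "\<dots> \<le> 1 * lp_norm p (\<lambda>i. M i j)"
        using lp_coord[OF p xl, of j] that lp_nonneg[OF col] unfolding S_def by (intro mult_right_mono) auto
      finally show "lp_norm p (\<lambda>i. x j * M i j) \<le> lp_norm p (\<lambda>i. M i j)" by simp
    qed
    finally show ?thesis by (simp add: mult.commute)
  qed
  have bdd: "bdd_above ((\<lambda>x. lp_norm p (\<lambda>i. \<Sum>j<k. M i j * x j)) ` S)"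
    using bd by (intro bdd_aboveI2) 
  have op: "mat_opnorm_inf p k M = (SUP x\<in>S. lp_norm p (\<lambda>i. \<Sum>j<k. M i j * x j))"
    by (simp add: mat_opnorm_inf_def S_def)
  have upper: "lp_norm p (\<lambda>i. \<Sum>j<k. M i j * x j) \<le> mat_opnorm_inf p k M" if "x \<in> S" for x
    unfolding op by (rule cSUP_upper[OF that bdd])
  have z: "(\<lambda>_. 0::real) \<in> S" by (simp add: S_def lp_zero)
  from upper[OF z] show nn: "0 \<le> mat_opnorm_inf p k M" by (simp add: lp_zero)
  have yl: "in_lp p y" using y lp_fin by blast
  define ny where "ny = lp_norm p y"
  have ny0: "0 \<le> ny" using lp_nonneg[OF yl] ny_def by simp
  show "lp_norm p (\<lambda>i. \<Sum>j<k. M i j * y j) \<le> mat_opnorm_inf p k M * lp_norm p y"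
  proof (cases "ny = 0")
    case True
    have "y j = 0" for j using lp_coord[OF p yl, of j] True ny_def by simp
    then show ?thesis using nn ny0 ny_def by (simp add: lp_zero)
  next
    case False
    define y' where "y' j = (1/ny) * y j" for j
    have "lp_norm p y' \<le> \<bar>1/ny\<bar> * ny" using lp_scale[OF p yl, of "1/ny"] unfolding y'_def ny_def by blast
    then have "lp_norm p y' \<le> 1" using False ny0 by simp
    then have y'S: "y' \<in> S" using y by (simp add: S_def y'_def)
    have eq: "(\<lambda>i. \<Sum>j<k. M i j * y j) = (\<lambda>i. ny * (\<Sum>j<k. M i j * y' j))"
      using False by (auto simp: y'_def sum_distrib_left)
    have "lp_norm p (\<lambda>i. ny * (\<Sum>j<k. M i j * y' j)) \<le> \<bar>ny\<bar> * lp_norm p (\<lambda>i. \<Sum>j<k. M i j * y' j)"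
      using lp_scale[OF p outlp] by blast
    also have "\<dots> \<le> ny * mat_opnorm_inf p k M" using upper[OF y'S] ny0 by (simp add: mult_left_mono)
    finally show ?thesis unfolding eq ny_def by (simp add: mult.commute)
  qed
qed

theorem corollary4p4:
  fixes p :: ereal and d :: nat and m :: "nat \<Rightarrow> nat"
    and W P :: "nat \<Rightarrow> nat \<Rightarrow> nat \<Rightarrow> real"
  assumes p: "1 \<le> p"
    and d: "d \<ge> 1"
    and m0: "m 0 = d"
    and mpos: "\<forall>n\<ge>1. 0 < m n"
    and mmono: "\<forall>n\<ge>1. m n \<le> m (Suc n)"
    and WP: "\<forall>n\<ge>1. \<forall>i<m n. \<forall>j<m (n - 1). W n i j = Imat i j + P n i j"
    and summ: "summable (\<lambda>n. mat_opnorm p (m (Suc n)) (m n) (P (Suc n)))"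
  shows "\<exists>L :: nat \<Rightarrow> nat \<Rightarrow> real.
           (\<forall>j<d. in_lp p (\<lambda>i. L i j)) \<and>
           (\<lambda>n. mat_opnorm_inf p d (\<lambda>i j. embedded_prod m W n i j - L i j))
             \<longlonglongrightarrow> 0"
proof -
  define E where "E = embedded_prod m W"
  define Ex where "Ex n x i = (\<Sum>j<d. E n i j * x j)" for n and x :: "nat \<Rightarrow> real" and i
  define Pt where "Pt n i j = (if i < m (Suc n) then P (Suc n) i j else 0)" for n i j
  define a where "a n = mat_opnorm p (m (Suc n)) (m n) (P (Suc n))" for n
  have aPt: "a n = mat_opnorm_inf p (m n) (Pt n)" for n
    by (simp add: a_def mat_opnorm_def Pt_def[abs_def])
  define Q where "Q n x i = (\<Sum>k<m n. Pt n i k * Ex n x k)" for n x i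
  define U where "U = {x :: nat \<Rightarrow> real. (\<forall>j\<ge>d. x j = 0) \<and> lp_norm p x \<le> 1}"
  have F1: "Ex n x i = 0" if "i \<ge> m n" for n x i
    using that by (simp add: Ex_def E_def embedded_prod_def)
  have F3: "in_lp p (Ex n x)" for n x by (rule lp_fin[of "m n"]) (use F1 in auto)
  have rec: "Ex (Suc n) x i = Ex n x i + Q n x i" if n1: "n \<ge> 1" for n x i
  proof (cases "i < m (Suc n)")
    case True
    have "Ex (Suc n) x i = (\<Sum>j<d. (\<Sum>k<m n. W (Suc n) i k * mat_prod m W n k j) * x j)"
      using True by (simp add: Ex_def E_def embedded_prod_def)
    also have "\<dots> = (\<Sum>k<m n. W (Suc n) i k * (\<Sum>j<d. mat_prod m W n k j * x j))"
      by (simp add: sum_distrib_left sum_distrib_right mult.assoc sum.swap[of _ "{..<d}"])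
    also have "\<dots> = (\<Sum>k<m n. W (Suc n) i k * Ex n x k)"
      by (intro sum.cong refl) (simp add: Ex_def E_def embedded_prod_def)
    also have "\<dots> = (\<Sum>k<m n. (Imat i k + P (Suc n) i k) * Ex n x k)"
      using WP True by (intro sum.cong refl) auto
    also have "\<dots> = (\<Sum>k<m n. Imat i k * Ex n x k) + (\<Sum>k<m n. P (Suc n) i k * Ex n x k)"
      by (simp add: distrib_right sum.distrib)
    also have "(\<Sum>k<m n. Imat i k * Ex n x k) = Ex n x i"
    proof -
      have "(\<lambda>k. Imat i k * Ex n x k) = (\<lambda>k. if i = k then Ex n x k else 0)"
        by (auto simp: Imat_def)
      then have "(\<Sum>k<m n. Imat i k * Ex n x k) = (\<Sum>k<m n. if i = k then Ex n x k else 0)"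
        by (metis (no_types, lifting))
      also have "\<dots> = (if i \<in> {..<m n} then Ex n x i else 0)" by (rule sum.delta'[OF finite_lessThan])
      finally show ?thesis using F1[of n i x] by (auto split: if_splits)
    qed
    also have "(\<Sum>k<m n. P (Suc n) i k * Ex n x k) = Q n x i"
      using True by (simp add: Q_def Pt_def)
    finally show ?thesis .
  next
    case False
    have "m n \<le> i" using False mmono n1 by (meson le_trans not_le)
    then show ?thesis using F1[of "Suc n" i x] F1[of n i x] False
      by (simp add: Q_def Pt_def)
  qed
  have QB: "lp_norm p (Q n x) \<le> a n * lp_norm p (Ex n x)" for n x
    unfolding aPt Q_def
    by (rule opnorm_apply(1)[OF p, of "m (Suc n)"]) (auto simp: Pt_def F1)
  have a0: "0 \<le> a n" for n
    unfolding aPt by (rule opnorm_apply(2)[OF p, where r="m (Suc n)" and y="\<lambda>_. 0"]) (auto simp: Pt_def)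
  have Qlp: "in_lp p (Q n x)" for n x by (rule lp_fin[of "m (Suc n)"]) (auto simp: Q_def Pt_def)
  define C1 where "C1 = mat_opnorm_inf p d (E 1)"
  have C1: "0 \<le> C1" "lp_norm p (Ex 1 x) \<le> C1" if "x \<in> U" for x
  proof -
    have rows: "\<forall>i j. i \<ge> m 1 \<longrightarrow> E 1 i j = 0" by (simp add: E_def embedded_prod_def)
    have xs: "\<forall>j\<ge>d. x j = 0" and xn: "lp_norm p x \<le> 1" using that by (auto simp: U_def)
    show c0: "0 \<le> C1" unfolding C1_def by (rule opnorm_apply(2)[OF p rows xs])
    have "lp_norm p (Ex 1 x) \<le> C1 * lp_norm p x"
      unfolding C1_def Ex_def[abs_def] using opnorm_apply(1)[OF p rows xs] by simp
    also have "\<dots> \<le> C1 * 1" using c0 xn by (intro mult_left_mono) auto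
    finally show "lp_norm p (Ex 1 x) \<le> C1" by simp
  qed
  have U0: "(\<lambda>_. 0) \<in> U" by (simp add: U_def lp_zero)
  have C1n: "0 \<le> C1" using C1(1)[OF U0] .
  define C where "C = C1 * exp (suminf a)"
  have C0: "0 \<le> C" using C1n by (simp add: C_def)
  have step: "lp_norm p (Ex (Suc n) x) \<le> (1 + a n) * lp_norm p (Ex n x)" if "n \<ge> 1" for n x
  proof -
    have "Ex (Suc n) x = (\<lambda>i. Ex n x i + Q n x i)" using rec[OF that] by auto
    then have "lp_norm p (Ex (Suc n) x) \<le> lp_norm p (Ex n x) + lp_norm p (Q n x)"
      using lp_add[OF p F3 Qlp, of n x n x] by simp
    also have "\<dots> \<le> lp_norm p (Ex n x) + a n * lp_norm p (Ex n x)" using QB by simp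
    finally show ?thesis by (simp add: algebra_simps)
  qed
  have growth: "lp_norm p (Ex (Suc n) x) \<le> C1 * exp (\<Sum>l<Suc n. a l)" if "x \<in> U" for n x
  proof (induction n)
    case 0
    have "C1 \<le> C1 * exp (a 0)" using C1n a0[of 0] by (simp add: mult_le_cancel_left1)
    then show ?case using C1(2)[OF that] by simp
  next
    case (Suc n)
    have "lp_norm p (Ex (Suc (Suc n)) x) \<le> (1 + a (Suc n)) * lp_norm p (Ex (Suc n) x)"
      by (rule step) simp
    also have "\<dots> \<le> exp (a (Suc n)) * (C1 * exp (\<Sum>l<Suc n. a l))"
      using Suc a0[of "Suc n"] by (intro mult_mono) (auto intro: lp_nonneg F3)
    also have "\<dots> = C1 * exp (\<Sum>l<Suc (Suc n). a l)" by (simp add: exp_add)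
    finally show ?case .
  qed
  have bound: "lp_norm p (Ex n x) \<le> C" if xU: "x \<in> U" and n1: "n \<ge> 1" for n x
  proof -
    obtain k where k: "n = Suc k" using n1 by (cases n) auto
    have "(\<Sum>l<Suc k. a l) \<le> suminf a" using summ a0 by (intro sum_le_suminf) (auto simp: a_def)
    then have "C1 * exp (\<Sum>l<Suc k. a l) \<le> C" unfolding C_def using C1n by (intro mult_left_mono) auto
    then show ?thesis using growth[OF xU, of k] k by simp
  qed
  define T where "T n = (\<Sum>l. a (l + n))" for n
  have sa: "summable a" using summ by (simp add: a_def[abs_def])
  have T0: "T \<longlonglongrightarrow> 0" unfolding T_def by (rule suminf_exist_split2[OF sa])
  have Tge: "(\<Sum>l\<in>{n..<K}. a l) \<le> T n" for n K
  proof -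
    have "(\<Sum>l\<in>{n..<K}. a l) = (\<Sum>l<K - n. a (l + n))"
    proof (cases "n \<le> K")
      case True
      then show ?thesis
        using sum.shift_bounds_nat_ivl[of a 0 n "K - n"] by (simp add: lessThan_atLeast0 add.commute)
    qed simp
    also have "\<dots> \<le> T n" unfolding T_def
      by (intro sum_le_suminf) (auto simp: a0 summable_iff_shift[of a n] sa)
    finally show ?thesis .
  qed
  have cauchy: "lp_norm p (\<lambda>i. Ex K x i - Ex n x i) \<le> C * (\<Sum>l\<in>{n..<K}. a l)"
    if "x \<in> U" "n \<ge> 1" "K \<ge> n" for n K x
    using that(3)
  proof (induction K rule: dec_induct)
    case base
    then show ?case by (simp add: lp_zero)
  next
    case (step K)
    have dl: "in_lp p (\<lambda>i. Ex K x i - Ex n x i)"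
      by (rule lp_fin[of "max (m K) (m n)"]) (simp add: F1)
    have "(\<lambda>i. Ex (Suc K) x i - Ex n x i) = (\<lambda>i. (Ex K x i - Ex n x i) + Q K x i)"
      using rec[of K] step(1) that(2) by auto
    then have "lp_norm p (\<lambda>i. Ex (Suc K) x i - Ex n x i) \<le> lp_norm p (\<lambda>i. Ex K x i - Ex n x i) + lp_norm p (Q K x)"
      using lp_add[OF p dl Qlp, of K x] by simp
    also have "\<dots> \<le> C * (\<Sum>l\<in>{n..<K}. a l) + a K * C"
    proof -
      have "a K * lp_norm p (Ex K x) \<le> a K * C"
        using bound[OF that(1), of K] step(1) that(2) a0[of K] by (intro mult_left_mono) auto
      then show ?thesis using step(3) QB[of K x] by linarith
    qed
    also have "\<dots> = C * (\<Sum>l\<in>{n..<Suc K}. a l)" using step(1) by (simp add: algebra_simps)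
    finally show ?case .
  qed
  have cauchy2: "lp_norm p (\<lambda>i. Ex K x i - Ex n x i) \<le> C * T n"
    if "x \<in> U" "n \<ge> 1" "K \<ge> n" for n K x
    using cauchy[OF that] Tge[of n K] C0 by (meson mult_left_mono order.trans)
  define e where "e j i = (if i = j then 1 else (0::real))" for j i :: nat
  have eU: "e j \<in> U" if "j < d" for j using that lp_unit[OF p, of j] by (auto simp: U_def e_def[abs_def])
  have Exe: "Ex n (e j) i = E n i j" if "j < d" for n j i
  proof -
    have "(\<lambda>ja. E n i ja * e j ja) = (\<lambda>ja. if ja = j then E n i ja else 0)"
      by (auto simp: e_def)
    then have "Ex n (e j) i = (\<Sum>ja<d. if ja = j then E n i ja else 0)"
      unfolding Ex_def by (metis (no_types, lifting))
    also have "\<dots> = E n i j" using that by (simp add: sum.delta[OF finite_lessThan])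
    finally show ?thesis .
  qed
  define L where "L i j = lim (\<lambda>n. E n i j)" for i j
  have conv: "(\<lambda>n. E n i j) \<longlonglongrightarrow> L i j" if j: "j < d" for i j
  proof -
    have CT: "(\<lambda>n. C * T n) \<longlonglongrightarrow> 0" using tendsto_mult[OF tendsto_const T0, of C] by simp
    have "Cauchy (\<lambda>n. E n i j)"
    proof (rule metric_CauchyI)
      fix eps :: real assume eps: "eps > 0"
      obtain N where N: "\<forall>n\<ge>N. \<bar>C * T n\<bar> < eps / 2"
        using CT[unfolded LIMSEQ_iff] eps by (metis diff_zero half_gt_zero real_norm_def)
      have close: "\<bar>E K i j - E (Suc N) i j\<bar> < eps / 2" if "K \<ge> Suc N" for K
      proof -
        have "\<bar>E K i j - E (Suc N) i j\<bar> \<le> lp_norm p (\<lambda>i. Ex K (e j) i - Ex (Suc N) (e j) i)"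
        proof -
          have dl: "in_lp p (\<lambda>i. Ex K (e j) i - Ex (Suc N) (e j) i)"
            by (rule lp_fin[of "max (m K) (m (Suc N))"]) (simp add: F1)
          show ?thesis using lp_coord[OF p dl, of i] by (simp add: Exe[OF j])
        qed
        also have "\<dots> \<le> C * T (Suc N)" using cauchy2[OF eU[OF j], of "Suc N" K] that by simp
        also have "\<dots> < eps / 2" using N by (metis abs_less_iff le_SucI order_refl)
        finally show ?thesis .
      qed
      show "\<exists>M. \<forall>m\<ge>M. \<forall>n\<ge>M. dist (E m i j) (E n i j) < eps"
      proof (intro exI allI impI)
        fix m' n' assume "m' \<ge> Suc N" "n' \<ge> Suc N"
        then show "dist (E m' i j) (E n' i j) < eps"
          using close[of m'] close[of n'] unfolding dist_real_def by linarith
      qed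
    qed
    then show ?thesis unfolding L_def by (simp add: Cauchy_convergent_iff convergent_LIMSEQ_iff)
  qed
  have Lx: "(\<lambda>K. Ex K x i) \<longlonglongrightarrow> (\<Sum>j<d. L i j * x j)" for x i
    unfolding Ex_def by (intro tendsto_sum tendsto_mult conv tendsto_const) auto
  have main: "lp_norm p (\<lambda>i. \<Sum>j<d. (E n i j - L i j) * x j) \<le> C * T n"
    if "x \<in> U" "n \<ge> 1" for n x
  proof -
    have fat: "in_lp p (\<lambda>i. (\<Sum>j<d. L i j * x j) - Ex n x i) \<and>
               lp_norm p (\<lambda>i. (\<Sum>j<d. L i j * x j) - Ex n x i) \<le> C * T n"
    proof (rule lp_fatou[OF p, of "\<lambda>K i. Ex (K + n) x i - Ex n x i"])
      show "(\<lambda>K. Ex (K + n) x i - Ex n x i) \<longlonglongrightarrow> (\<Sum>j<d. L i j * x j) - Ex n x i" for i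
        by (intro tendsto_diff tendsto_const LIMSEQ_ignore_initial_segment Lx)
      show "in_lp p (\<lambda>i. Ex (K + n) x i - Ex n x i)" for K
        by (rule lp_fin[of "max (m (K + n)) (m n)"]) (simp add: F1)
      show "lp_norm p (\<lambda>i. Ex (K + n) x i - Ex n x i) \<le> C * T n" for K
        using cauchy2[OF that, of "K + n"] by simp
    qed
    have eq: "(\<lambda>i. \<Sum>j<d. (E n i j - L i j) * x j) = (\<lambda>i. (-1) * ((\<Sum>j<d. L i j * x j) - Ex n x i))"
      by (auto simp: Ex_def left_diff_distrib sum_subtractf)
    have "lp_norm p (\<lambda>i. (-1) * ((\<Sum>j<d. L i j * x j) - Ex n x i)) \<le> C * T n"
      using lp_scale[OF p fat[THEN conjunct1], of "-1"] fat by simp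
    then show ?thesis unfolding eq .
  qed
  have opb: "mat_opnorm_inf p d (\<lambda>i j. E n i j - L i j) \<le> C * T n" if "n \<ge> 1" for n
    unfolding mat_opnorm_inf_def using main[OF _ that] U0
    by (intro cSUP_least) (auto simp: U_def)
  have opn: "0 \<le> mat_opnorm_inf p d (\<lambda>i j. E n i j - L i j)" if "n \<ge> 1" for n
  proof -
    have bdd: "bdd_above ((\<lambda>x. lp_norm p (\<lambda>i. \<Sum>j<d. (E n i j - L i j) * x j)) ` U)"
      using main[OF _ that] by (intro bdd_aboveI2) 
    have "lp_norm p (\<lambda>i. \<Sum>j<d. (E n i j - L i j) * (\<lambda>_. 0) j) \<le> (SUP x\<in>U. lp_norm p (\<lambda>i. \<Sum>j<d. (E n i j - L i j) * x j))"
      by (rule cSUP_upper[OF U0 bdd])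
    then show ?thesis by (simp add: mat_opnorm_inf_def U_def lp_zero)
  qed
  have lim: "(\<lambda>n. mat_opnorm_inf p d (\<lambda>i j. E n i j - L i j)) \<longlonglongrightarrow> 0"
  proof (rule tendsto_sandwich[of "\<lambda>_. 0" _ _ "\<lambda>n. C * T n"])
    show "\<forall>\<^sub>F n in sequentially. 0 \<le> mat_opnorm_inf p d (\<lambda>i j. E n i j - L i j)"
      using opn by (auto simp: eventually_sequentially)
    show "\<forall>\<^sub>F n in sequentially. mat_opnorm_inf p d (\<lambda>i j. E n i j - L i j) \<le> C * T n"
      using opb by (auto simp: eventually_sequentially)
    show "(\<lambda>n. C * T n) \<longlonglongrightarrow> 0" using tendsto_mult[OF tendsto_const T0, of C] by simp
  qed simp
  have cols: "in_lp p (\<lambda>i. L i j)" if j: "j < d" for j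
  proof -
    have "in_lp p (\<lambda>i. L i j) \<and> lp_norm p (\<lambda>i. L i j) \<le> C"
    proof (rule lp_fatou[OF p, of "\<lambda>K i. Ex (Suc K) (e j) i"])
      show "(\<lambda>K. Ex (Suc K) (e j) i) \<longlonglongrightarrow> L i j" for i
        unfolding Exe[OF j] using LIMSEQ_Suc[OF conv[OF j]] .
      show "in_lp p (Ex (Suc K) (e j))" for K by (rule F3)
      show "lp_norm p (Ex (Suc K) (e j)) \<le> C" for K by (rule bound[OF eU[OF j]]) simp
    qed
    then show ?thesis ..
  qed
  show ?thesis using cols lim unfolding E_def by blast
qed

end
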